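(* Let $V$ be a finite set with $|V|=K$, let $\eta>0$, and let $\ell_1,\dots,\ell_T:V\to[0,\infty)$ be loss functions (so $\ell_t(i)\ge 0$ for all $t,i$). Let $q_1,\dots,q_T$ be the probability vectors $$q_t(i)=\frac{\exp(-\eta\sum_{s=1}^{t-1}\ell_s(i))}{\sum_{j\in V}\exp(-\eta\sum_{s=1}^{t-1}\ell_s(j))},\qquad i\in V.$$ For each $t$ let $S_t\subseteq V$ be such that $\ell_t(i)\le 1/\eta$ for all $i\in S_t$. Then for any $i^\star\in V$, $$\sum_{t=1}^T\sum_{i\in V}q_t(i)\ell_t(i)-\sum_{t=1}^T\ell_t(i^\star)\le\frac{\ln K}{\eta}+\eta\sum_{t=1}^T\Big(\sum_{i\in S_t}q_t(i)(1-q_t(i))\ell_t(i)^2+\sum_{i\notin S_t}q_t(i)\ell_t(i)^2\Big).$$ *)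

theory Defs
  imports Complex_Main
begin

definition hedge_q :: "'a set \<Rightarrow> real \<Rightarrow> (nat \<Rightarrow> 'a \<Rightarrow> real) \<Rightarrow> nat \<Rightarrow> 'a \<Rightarrow> real" where
  "hedge_q V \<eta> l t i =
     exp (- \<eta> * (\<Sum>s=1..<t. l s i)) / (\<Sum>j\<in>V. exp (- \<eta> * (\<Sum>s=1..<t. l s j)))"

end

theory Submission
  imports Defs
begin

lemma exp_quad: fixes y :: real assumes "y \<ge> -1" shows "exp (-y) \<le> 1 - y + y\<^sup>2"
proof (cases "y \<ge> 0")
  case True
  have "1 + y \<le> exp y" by (rule exp_ge_add_one_self)
  hence "exp (-y) \<le> 1 / (1 + y)" using True by (simp add: exp_minus field_simps)
  also have "\<dots> \<le> 1 - y + y\<^sup>2" using True by (simp add: field_simps power2_eq_square)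
  finally show ?thesis .
next
  case False
  have "exp (-y) \<le> 1 + (-y) + (-y)\<^sup>2" by (rule exp_bound) (use False assms in auto)
  thus ?thesis by simp
qed

lemma sq_sum_ge: fixes a :: "'b \<Rightarrow> real" assumes "finite A" "\<And>i. i \<in> A \<Longrightarrow> a i \<ge> 0"
  shows "(\<Sum>i\<in>A. (a i)\<^sup>2) \<le> (\<Sum>i\<in>A. a i)\<^sup>2"
  using assms
proof (induction A rule: finite_induct)
  case (insert x F)
  have "0 \<le> a x * (\<Sum>i\<in>F. a i)" by (intro mult_nonneg_nonneg sum_nonneg) (auto simp: insert.prems)
  thus ?case using insert by (simp add: power2_eq_square algebra_simps)
qed simp


lemma round_bound:
  fixes q x :: "'b \<Rightarrow> real"
  assumes fin: "finite V" and q0: "\<And>i. i \<in> V \<Longrightarrow> q i \<ge> 0" and q1: "(\<Sum>i\<in>V. q i) = 1"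
    and x0: "\<And>i. i \<in> V \<Longrightarrow> x i \<ge> 0" and SV: "S \<subseteq> V" and x1: "\<And>i. i \<in> S \<Longrightarrow> x i \<le> 1"
  shows "ln (\<Sum>i\<in>V. q i * exp (- x i)) \<le> - (\<Sum>i\<in>V. q i * x i)
     + ((\<Sum>i\<in>S. q i * (1 - q i) * (x i)\<^sup>2) + (\<Sum>i\<in>V - S. q i * (x i)\<^sup>2))"
proof -
  define c where "c = (\<Sum>i\<in>S. q i * x i)"
  have h1: "(\<Sum>i\<in>V. c * q i) = c" using q1 by (simp add: sum_distrib_left[symmetric])
  have h2: "(\<Sum>i\<in>V. c * (c * q i)) = c * c" using q1 by (simp add: sum_distrib_left[symmetric])
  have finS: "finite S" using fin SV finite_subset by blast
  have c0: "c \<ge> 0" unfolding c_def using SV q0 x0 by (auto intro!: sum_nonneg)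
  have "c \<le> (\<Sum>i\<in>S. q i)" unfolding c_def
    using SV q0 x1 by (intro sum_mono) (auto intro: mult_left_le)
  also have "\<dots> \<le> (\<Sum>i\<in>V. q i)" using SV q0 fin by (intro sum_mono2) auto
  finally have c1: "c \<le> 1" using q1 by simp
  define z where "z = (\<Sum>i\<in>V. q i * exp (- (x i - c)))"
  have eq: "(\<Sum>i\<in>V. q i * exp (- x i)) = exp (-c) * z"
    unfolding z_def sum_distrib_left by (intro sum.cong) (auto simp: exp_diff exp_minus field_simps)
  obtain j where j: "j \<in> V" "q j > 0"
  proof (rule ccontr)
    assume "\<not> thesis"
    hence "\<forall>i\<in>V. q i \<le> 0" using that by force
    hence "(\<Sum>i\<in>V. q i) \<le> 0" by (intro sum_nonpos) auto
    thus False using q1 by simp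
  qed
  have zpos: "z > 0" unfolding z_def
    using j q0 fin by (intro sum_pos2[of V j]) auto
  have "ln (\<Sum>i\<in>V. q i * exp (- x i)) = -c + ln z" using eq zpos by (simp add: ln_mult)
  also have "\<dots> \<le> -c + (z - 1)" using ln_le_minus_one[OF zpos] by simp
  also have "z - 1 = (\<Sum>i\<in>V. q i * (exp (- (x i - c)) - 1))"
    unfolding z_def using q1 by (simp add: algebra_simps sum_subtractf)
  also have "\<dots> \<le> (\<Sum>i\<in>V. q i * (- (x i - c) + (x i - c)\<^sup>2))"
  proof (intro sum_mono mult_left_mono)
    fix i assume i: "i \<in> V"
    have "exp (- (x i - c)) \<le> 1 - (x i - c) + (x i - c)\<^sup>2" using x0[OF i] c1 by (intro exp_quad) auto
    thus "exp (- (x i - c)) - 1 \<le> - (x i - c) + (x i - c)\<^sup>2" by simp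
  qed (use q0 in auto)
  also have "\<dots> = c - (\<Sum>i\<in>V. q i * x i) + (\<Sum>i\<in>V. q i * (x i)\<^sup>2) - 2 * c * (\<Sum>i\<in>V. q i * x i) + c\<^sup>2"
    using q1 h1 h2 by (simp add: power2_eq_square algebra_simps sum.distrib sum_subtractf sum_distrib_left sum_distrib_right)
  finally have A: "ln (\<Sum>i\<in>V. q i * exp (- x i)) \<le> - (\<Sum>i\<in>V. q i * x i) + (\<Sum>i\<in>V. q i * (x i)\<^sup>2) - 2 * c * (\<Sum>i\<in>V. q i * x i) + c\<^sup>2"
    by simp
  have "c \<le> (\<Sum>i\<in>V. q i * x i)" unfolding c_def using SV q0 x0 fin by (intro sum_mono2) auto
  hence B: "c\<^sup>2 \<le> c * (\<Sum>i\<in>V. q i * x i)" using c0 by (simp add: power2_eq_square mult_left_mono)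
  have C: "(\<Sum>i\<in>S. (q i * x i)\<^sup>2) \<le> c\<^sup>2" unfolding c_def
    using SV q0 x0 finS by (intro sq_sum_ge) auto
  have D: "(\<Sum>i\<in>V. q i * (x i)\<^sup>2) = (\<Sum>i\<in>S. q i * (x i)\<^sup>2) + (\<Sum>i\<in>V - S. q i * (x i)\<^sup>2)"
    using sum.subset_diff[OF SV fin] by (simp add: add.commute)
  have E: "(\<Sum>i\<in>S. q i * (1 - q i) * (x i)\<^sup>2) = (\<Sum>i\<in>S. q i * (x i)\<^sup>2) - (\<Sum>i\<in>S. (q i * x i)\<^sup>2)"
    by (simp add: sum_subtractf[symmetric] power2_eq_square algebra_simps)
  show ?thesis using A B C D E c0 by linarith
qed


theorem lemma4:
  fixes V :: "'a set" and K :: nat and \<eta> :: real and l :: "nat \<Rightarrow> 'a \<Rightarrow> real"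
    and T :: nat and S :: "nat \<Rightarrow> 'a set" and istar :: 'a
  assumes "finite V" and "card V = K" and "\<eta> > 0"
    and "\<And>t i. t \<in> {1..T} \<Longrightarrow> i \<in> V \<Longrightarrow> l t i \<ge> 0"
    and "\<And>t. t \<in> {1..T} \<Longrightarrow> S t \<subseteq> V"
    and "\<And>t i. t \<in> {1..T} \<Longrightarrow> i \<in> S t \<Longrightarrow> l t i \<le> 1 / \<eta>"
    and "istar \<in> V"
  shows "(\<Sum>t=1..T. \<Sum>i\<in>V. hedge_q V \<eta> l t i * l t i) - (\<Sum>t=1..T. l t istar)
         \<le> ln (real K) / \<eta>
           + \<eta> * (\<Sum>t=1..T. (\<Sum>i\<in>S t. hedge_q V \<eta> l t i * (1 - hedge_q V \<eta> l t i) * (l t i)\<^sup>2)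
                              + (\<Sum>i\<in>V - S t. hedge_q V \<eta> l t i * (l t i)\<^sup>2))"
proof -
  note fin = assms(1) and eta = assms(3)
  define L where "L t i = (\<Sum>s=1..<t. l s i)" for t i
  define W where "W t = (\<Sum>j\<in>V. exp (- \<eta> * L t j))" for t
  define q where "q t i = hedge_q V \<eta> l t i" for t i
  define R where "R t = (\<Sum>i\<in>S t. q t i * (1 - q t i) * (l t i)\<^sup>2) + (\<Sum>i\<in>V - S t. q t i * (l t i)\<^sup>2)" for t
  have qdef: "q t i = exp (- \<eta> * L t i) / W t" for t i
    unfolding q_def hedge_q_def L_def W_def by simp
  have Wpos: "W t > 0" for t
    unfolding W_def using fin assms(7) by (intro sum_pos) auto
  have round: "ln (W (Suc t)) - ln (W t) \<le> - \<eta> * (\<Sum>i\<in>V. q t i * l t i) + \<eta>\<^sup>2 * R t"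
    if t: "t \<in> {1..T}" for t
  proof -
    have Lsuc: "L (Suc t) j = L t j + l t j" for j using t unfolding L_def by simp
    have "W (Suc t) = (\<Sum>j\<in>V. exp (- \<eta> * L t j) * exp (- (\<eta> * l t j)))"
      unfolding W_def Lsuc by (simp add: distrib_left exp_add[symmetric])
    also have "\<dots> = W t * (\<Sum>j\<in>V. q t j * exp (- (\<eta> * l t j)))"
      unfolding qdef sum_distrib_left using Wpos[of t] by (intro sum.cong) auto
    finally have eqW: "W (Suc t) = W t * (\<Sum>j\<in>V. q t j * exp (- (\<eta> * l t j)))" .
    have q0: "q t i \<ge> 0" for i unfolding qdef using Wpos[of t] by simp
    have q1: "(\<Sum>i\<in>V. q t i) = 1" unfolding qdef sum_divide_distrib[symmetric] W_def
      using Wpos[of t] unfolding W_def by simp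
    have rb: "ln (\<Sum>i\<in>V. q t i * exp (- (\<eta> * l t i))) \<le> - (\<Sum>i\<in>V. q t i * (\<eta> * l t i))
     + ((\<Sum>i\<in>S t. q t i * (1 - q t i) * (\<eta> * l t i)\<^sup>2) + (\<Sum>i\<in>V - S t. q t i * (\<eta> * l t i)\<^sup>2))"
    proof (rule round_bound[OF fin])
      fix i assume "i \<in> S t"
      hence "l t i \<le> 1 / \<eta>" using assms(6) t by auto
      thus "\<eta> * l t i \<le> 1" using eta by (simp add: field_simps)
    qed (use q0 q1 assms(4,5) t eta in auto)
    have "ln (W (Suc t)) - ln (W t) = ln (\<Sum>i\<in>V. q t i * exp (- (\<eta> * l t i)))"
    proof -
      have "(\<Sum>i\<in>V. q t i * exp (- (\<eta> * l t i))) > 0"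
        using eqW Wpos[of t] Wpos[of "Suc t"] by (simp add: zero_less_mult_iff)
      thus ?thesis using eqW Wpos[of t] by (simp add: ln_mult)
    qed
    also have "\<dots> \<le> - \<eta> * (\<Sum>i\<in>V. q t i * l t i) + \<eta>\<^sup>2 * R t"
      using rb unfolding R_def
      by (simp add: sum_distrib_left power_mult_distrib algebra_simps sum_negf)
    finally show ?thesis .
  qed
  have "ln (W (Suc T)) - ln (W 1) = (\<Sum>t=1..T. ln (W (Suc t)) - ln (W t))"
    by (rule sum_Suc_diff[symmetric]) simp
  also have "\<dots> \<le> (\<Sum>t=1..T. - \<eta> * (\<Sum>i\<in>V. q t i * l t i) + \<eta>\<^sup>2 * R t)"
    by (intro sum_mono round) auto
  also have "\<dots> = - \<eta> * (\<Sum>t=1..T. \<Sum>i\<in>V. q t i * l t i) + \<eta>\<^sup>2 * (\<Sum>t=1..T. R t)"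
    by (simp add: sum.distrib sum_distrib_left)
  finally have tel: "ln (W (Suc T)) - ln (W 1) \<le> - \<eta> * (\<Sum>t=1..T. \<Sum>i\<in>V. q t i * l t i) + \<eta>\<^sup>2 * (\<Sum>t=1..T. R t)" .
  have W1: "W 1 = real K" unfolding W_def L_def using assms(2) by simp
  have "exp (- \<eta> * L (Suc T) istar) \<le> W (Suc T)"
    unfolding W_def using fin assms(7) by (intro member_le_sum) auto
  hence "- \<eta> * L (Suc T) istar \<le> ln (W (Suc T))"
    using Wpos by (metis exp_gt_zero ln_exp ln_le_cancel_iff)
  moreover have "L (Suc T) istar = (\<Sum>t=1..T. l t istar)"
    unfolding L_def by (simp add: atLeastLessThanSuc_atLeastAtMost)
  ultimately have key: "\<eta> * ((\<Sum>t=1..T. \<Sum>i\<in>V. q t i * l t i) - (\<Sum>t=1..T. l t istar)) \<le> ln (real K) + \<eta>\<^sup>2 * (\<Sum>t=1..T. R t)"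
    using tel W1 by (simp add: algebra_simps)
  have "(\<Sum>t=1..T. \<Sum>i\<in>V. q t i * l t i) - (\<Sum>t=1..T. l t istar) \<le> (ln (real K) + \<eta>\<^sup>2 * (\<Sum>t=1..T. R t)) / \<eta>"
    using key eta by (simp add: pos_le_divide_eq mult.commute)
  also have "\<dots> = ln (real K) / \<eta> + \<eta> * (\<Sum>t=1..T. R t)"
    using eta by (simp add: field_simps power2_eq_square)
  finally show ?thesis unfolding q_def R_def .
qed

end
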